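(* Let $\Gamma$ be a labeled graph having a connected component with an odd number of edges. Then $c_\Gamma=0$.
   Context: A labeled graph with $V$ vertices and $E$ edges is a map $s:\{1,\ldots,E\}\to\mathcal{P}_2\{1,\ldots,V\}$ (edge $e$ joins the two vertices in $s(e)$; multiple edges allowed). Each edge with $s(e)=\{i,j\}$, $i<j$, is oriented $i\to j$. Define $c_\Gamma:=\sum_{\sigma\in S_V}\prod_{e:\,i\to j}\operatorname{sign}(\sigma(j)-\sigma(i))$, i.e. the sum over all renumberings of the vertices of $(-1)^{\#\text{edges whose orientation is inverted}}$, where after renumbering each edge is oriented from lower to higher label. *)

theory Defs
  imports "HOL-Combinatorics.Permutations"
begin

(* A labeled graph with V vertices and E edges: s e is a 2-element subset of {1..V}
   for each edge e in {1..E}. Multiple edges allowed. *)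
definition labeled_graph :: "nat \<Rightarrow> nat \<Rightarrow> (nat \<Rightarrow> nat set) \<Rightarrow> bool" where
  "labeled_graph V E s \<longleftrightarrow> (\<forall>e\<in>{1..E}. s e \<subseteq> {1..V} \<and> card (s e) = 2)"

definition adjacent :: "nat \<Rightarrow> (nat \<Rightarrow> nat set) \<Rightarrow> nat \<Rightarrow> nat \<Rightarrow> bool" where
  "adjacent E s i j \<longleftrightarrow> (\<exists>e\<in>{1..E}. s e = {i, j})"

definition component :: "nat \<Rightarrow> nat \<Rightarrow> (nat \<Rightarrow> nat set) \<Rightarrow> nat \<Rightarrow> nat set" where
  "component V E s v = {w \<in> {1..V}. (adjacent E s)\<^sup>*\<^sup>* v w}"

definition component_edges :: "nat \<Rightarrow> nat \<Rightarrow> (nat \<Rightarrow> nat set) \<Rightarrow> nat \<Rightarrow> nat set" where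
  "component_edges V E s v = {e \<in> {1..E}. s e \<subseteq> component V E s v}"

definition c_graph :: "nat \<Rightarrow> nat \<Rightarrow> (nat \<Rightarrow> nat set) \<Rightarrow> int" where
  "c_graph V E s = (\<Sum>\<sigma> | \<sigma> permutes {1..V}.
      \<Prod>e\<in>{1..E}. sgn (int (\<sigma> (Max (s e))) - int (\<sigma> (Min (s e)))))"

end

theory Submission
  imports Defs
begin

lemma rev_ex:
  fixes T :: "nat set"
  assumes "finite T"
  shows "\<exists>\<rho>. (\<forall>x\<in>T. \<rho> x \<in> T \<and> \<rho> (\<rho> x) = x) \<and> (\<forall>x\<in>T. \<forall>y\<in>T. x < y \<longrightarrow> \<rho> y < \<rho> x)"
  using assms
proof (induction "card T" arbitrary: T rule: less_induct)
  case less
  show ?case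
  proof (cases "T = {}")
    case True
    then show ?thesis by auto
  next
    case False
    define a where "a = Min T"
    define b where "b = Max T"
    have aT: "a \<in> T" and bT: "b \<in> T" using False less.prems a_def b_def by auto
    have ab: "\<And>z. z \<in> T \<Longrightarrow> a \<le> z \<and> z \<le> b" using less.prems a_def b_def by auto
    show ?thesis
    proof (cases "a = b")
      case True
      have "T = {a}" using ab aT True by fastforce
      then show ?thesis by (intro exI[of _ id]) auto
    next
      case ne: False
      define T' where "T' = T - {a, b}"
      have "card T' < card T" unfolding T'_def using aT less.prems
        by (intro psubset_card_mono) auto
      moreover have "finite T'" using less.prems T'_def by auto
      ultimately obtain \<rho>' where r1: "\<forall>x\<in>T'. \<rho>' x \<in> T' \<and> \<rho>' (\<rho>' x) = x"
        and r2: "\<forall>x\<in>T'. \<forall>y\<in>T'. x < y \<longrightarrow> \<rho>' y < \<rho>' x"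
        using less.hyps by blast
      define \<rho> where "\<rho> x = (if x = a then b else if x = b then a else \<rho>' x)" for x
      have T'ab: "\<And>z. z \<in> T' \<Longrightarrow> a < z \<and> z < b" using ab unfolding T'_def
        by (metis DiffD1 DiffD2 insertCI order_le_imp_less_or_eq)
      have "\<forall>x\<in>T. \<rho> x \<in> T \<and> \<rho> (\<rho> x) = x"
        using r1 aT bT ne T'ab unfolding \<rho>_def T'_def by auto
      moreover have "\<forall>x\<in>T. \<forall>y\<in>T. x < y \<longrightarrow> \<rho> y < \<rho> x"
      proof (intro ballI impI)
        fix x y assume xy: "x \<in> T" "y \<in> T" "x < y"
        have Tc: "\<And>z. z \<in> T \<Longrightarrow> z = a \<or> z = b \<or> z \<in> T'" unfolding T'_def by auto
        show "\<rho> y < \<rho> x"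
          using Tc[OF xy(1)] Tc[OF xy(2)] xy(3) ne T'ab r1 r2 ab[OF xy(1)] ab[OF xy(2)]
          unfolding \<rho>_def by (smt (verit) leD order_less_le)
      qed
      ultimately show ?thesis by blast
    qed
  qed
qed

theorem lemma5:
  fixes V E :: nat and s :: "nat \<Rightarrow> nat set"
  assumes "labeled_graph V E s"
    and "\<exists>v\<in>{1..V}. odd (card (component_edges V E s v))"
  shows "c_graph V E s = 0"
proof -
  obtain v where v: "v \<in> {1..V}" "odd (card (component_edges V E s v))" using assms(2) by blast
  define C where "C = component V E s v"
  define CE where "CE = component_edges V E s v"
  have CV: "C \<subseteq> {1..V}" unfolding C_def component_def by auto
  have edge: "Min (s e) < Max (s e) \<and> s e = {Min (s e), Max (s e)} \<and> s e \<subseteq> {1..V}"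
    if "e \<in> {1..E}" for e
  proof -
    have "card (s e) = 2" "s e \<subseteq> {1..V}" using assms(1) that unfolding labeled_graph_def by auto
    then obtain x y where "s e = {x, y}" "x \<noteq> y" by (auto simp: card_2_iff)
    then show ?thesis using \<open>s e \<subseteq> {1..V}\<close> by (cases "x < y") (auto simp: min_def max_def)
  qed
  have closed: "s e \<inter> C = {}" if e: "e \<in> {1..E}" "e \<notin> CE" for e
  proof (rule ccontr)
    assume "s e \<inter> C \<noteq> {}"
    obtain x y where xy: "s e = {x, y}" "s e \<subseteq> {1..V}" using edge[OF e(1)] by blast
    have adj: "adjacent E s x y" "adjacent E s y x" using xy e(1) unfolding adjacent_def
      by (auto intro!: bexI[of _ e] simp: insert_commute)
    have "x \<in> C \<or> y \<in> C" using \<open>s e \<inter> C \<noteq> {}\<close> xy by auto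
    then have "x \<in> C \<and> y \<in> C"
      using adj xy unfolding C_def component_def
      by (auto intro: rtranclp.rtrancl_into_rtrancl)
    then have "e \<in> CE" using e xy unfolding CE_def component_edges_def C_def by auto
    then show False using e by blast
  qed
  define R where "R T = (SOME \<rho>. (\<forall>x\<in>T. \<rho> x \<in> T \<and> \<rho> (\<rho> x) = x) \<and> (\<forall>x\<in>T. \<forall>y\<in>T. x < y \<longrightarrow> \<rho> y < \<rho> x))" for T :: "nat set"
  have R: "(\<forall>x\<in>T. R T x \<in> T \<and> R T (R T x) = x) \<and> (\<forall>x\<in>T. \<forall>y\<in>T. x < y \<longrightarrow> R T y < R T x)"
    if "finite T" for T
    unfolding R_def by (rule someI_ex[OF rev_ex[OF that]])
  define g where "g T y = (if y \<in> T then R T y else y)" for T y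
  define f where "f \<sigma> = g (\<sigma> ` C) \<circ> \<sigma>" for \<sigma> :: "nat \<Rightarrow> nat"
  define P where "P = {\<sigma>. \<sigma> permutes {1..V}}"
  define h where "h \<sigma> = (\<Prod>e\<in>{1..E}. sgn (int (\<sigma> (Max (s e))) - int (\<sigma> (Min (s e)))))" for \<sigma> :: "nat \<Rightarrow> nat"
  have finC: "finite C" using CV finite_subset by blast
  have gg: "g T (g T y) = y" if "finite T" for T y using R[OF that] unfolding g_def by auto
  have gT: "g T ` T = T" if "finite T" for T
  proof
    show "g T ` T \<subseteq> T" using R[OF that] unfolding g_def by auto
    show "T \<subseteq> g T ` T"
    proof
      fix x assume "x \<in> T"
      then have "g T x \<in> T" using R[OF that] unfolding g_def by auto
      then show "x \<in> g T ` T" using gg[OF that, of x] by (metis image_eqI)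
    qed
  qed
  have gperm: "g T permutes {1..V}" if "finite T" "T \<subseteq> {1..V}" for T
    unfolding permutes_def
  proof (intro conjI allI impI)
    fix x assume "x \<notin> {1..V}" then show "g T x = x" using that unfolding g_def by auto
  next
    fix y show "\<exists>!x. g T x = y"
      by (rule ex1I[of _ "g T y"]) (use gg[OF that(1)] in metis)+
  qed
  have fP: "f \<sigma> \<in> P" if "\<sigma> \<in> P" for \<sigma>
  proof -
    have sp: "\<sigma> permutes {1..V}" using that P_def by auto
    have "\<sigma> ` C \<subseteq> {1..V}" using CV permutes_image[OF sp] by auto
    then show ?thesis unfolding f_def P_def
      using permutes_compose[OF sp gperm] finC by auto
  qed
  have img: "f \<sigma> ` C = \<sigma> ` C" for \<sigma>
  proof -
    have "f \<sigma> ` C = g (\<sigma> ` C) ` (\<sigma> ` C)" unfolding f_def by (rule image_comp[symmetric])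
    also have "\<dots> = \<sigma> ` C" using gT finC by simp
    finally show ?thesis .
  qed
  have ff: "f (f \<sigma>) = \<sigma>" for \<sigma>
  proof -
    have "f (f \<sigma>) = g (\<sigma> ` C) \<circ> (g (\<sigma> ` C) \<circ> \<sigma>)"
      unfolding f_def[of "f \<sigma>"] img unfolding f_def ..
    then show ?thesis using gg finC by auto
  qed
  have hf: "h (f \<sigma>) = - h \<sigma>" if "\<sigma> \<in> P" for \<sigma>
  proof -
    have sp: "\<sigma> permutes {1..V}" using that P_def by auto
    have inj: "inj \<sigma>" using permutes_inj[OF sp] .
    define T where "T = \<sigma> ` C"
    have finT: "finite T" using finC T_def by auto
    have fs: "f \<sigma> x = (if x \<in> C then R T (\<sigma> x) else \<sigma> x)" for x
      unfolding f_def g_def T_def using inj by (auto simp: inj_image_mem_iff)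
    define q where "q \<sigma>' e = sgn (int (\<sigma>' (Max (s e))) - int (\<sigma>' (Min (s e))))" for \<sigma>' :: "nat \<Rightarrow> nat" and e
    have CEsub: "CE \<subseteq> {1..E}" unfolding CE_def component_edges_def by auto
    have q1: "q (f \<sigma>) e = - q \<sigma> e" if e: "e \<in> CE" for e
    proof -
      have eE: "e \<in> {1..E}" using e CEsub by auto
      let ?a = "Min (s e)" and ?b = "Max (s e)"
      have ab: "?a < ?b" "?a \<in> C" "?b \<in> C" using edge[OF eE] e unfolding CE_def component_edges_def C_def
        by auto
      have T: "\<sigma> ?a \<in> T" "\<sigma> ?b \<in> T" using ab T_def by auto
      have ne: "\<sigma> ?a \<noteq> \<sigma> ?b" using inj ab(1) by (metis less_irrefl injD)
      have anti: "\<And>x y. x \<in> T \<Longrightarrow> y \<in> T \<Longrightarrow> x < y \<Longrightarrow> R T y < R T x"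
        using R[OF finT] by blast
      have "(\<sigma> ?a < \<sigma> ?b \<and> R T (\<sigma> ?b) < R T (\<sigma> ?a)) \<or> (\<sigma> ?b < \<sigma> ?a \<and> R T (\<sigma> ?a) < R T (\<sigma> ?b))"
        using ne anti[OF T(1) T(2)] anti[OF T(2) T(1)] by linarith
      then show ?thesis
        unfolding q_def fs using ab by (auto simp: sgn_if)
    qed
    have q2: "q (f \<sigma>) e = q \<sigma> e" if e: "e \<in> {1..E} - CE" for e
    proof -
      have "Min (s e) \<notin> C" "Max (s e) \<notin> C" using closed[of e] e edge[of e] by auto
      then show ?thesis unfolding q_def fs by simp
    qed
    have "h (f \<sigma>) = prod (q (f \<sigma>)) ({1..E} - CE) * prod (q (f \<sigma>)) CE"
      unfolding h_def q_def by (rule prod.subset_diff[OF CEsub]) simp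
    also have "\<dots> = prod (q \<sigma>) ({1..E} - CE) * (\<Prod>e\<in>CE. - q \<sigma> e)"
      using q1 q2 by simp
    also have "\<dots> = - (prod (q \<sigma>) ({1..E} - CE) * prod (q \<sigma>) CE)"
      using v(2) unfolding CE_def[symmetric] by (simp add: prod_uminus)
    also have "prod (q \<sigma>) ({1..E} - CE) * prod (q \<sigma>) CE = h \<sigma>"
      unfolding h_def q_def by (rule prod.subset_diff[OF CEsub, symmetric]) simp
    finally show ?thesis .
  qed
  have "sum (\<lambda>\<sigma>. h (f \<sigma>)) P = sum h P"
    by (rule sum.reindex_bij_witness[of P f f]) (use ff fP in auto)
  moreover have "sum (\<lambda>\<sigma>. h (f \<sigma>)) P = - sum h P"
    using hf by (simp add: sum_negf)
  ultimately have "sum h P = 0" by simp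
  moreover have "c_graph V E s = sum h P" unfolding c_graph_def h_def P_def ..
  ultimately show ?thesis by simp
qed

end
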